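(* Let $n\ge2$ and $u\in\mathfrak D_n$. If either ($u(1)=1$ and $u(k)>0$ for all $1\le k\le n$) or ($u(1)<-1$, $u^{-1}(1)<-1$, and $|\{1\le i\le n: u(i)<0\}|=2$), then $$C(u)=\{t_1\}\cup\{t_i: i\ne1,\ |u(j)|<u(k)\text{ for all }0\le j\le i<k\le n\};$$ otherwise $$C(u)=\{t_i: i\ne1,\ |u(j)|<u(k)\text{ for all }0\le j\le i<k\le n\},$$ where $u(0)=0$ by convention and $i$ ranges over $\{0,1,\dots,n-1\}$.
   Context: $\mathfrak B_n$ is the group of signed permutations of $\{\pm1,\dots,\pm n\}$ ($w(-i)=-w(i)$), with $\tau_0=(-1,1)$ and $\tau_i=(i,i+1)(-i,-i-1)$ for $1\le i\le n-1$. For $n\ge2$, $\mathfrak D_n$ is the subgroup of $\mathfrak B_n$ (of order $2^{n-1}n!$) generated by $t_0=\tau_0\tau_1\tau_0$ (so $t_0(1)=-2$, $t_0(2)=-1$) and $t_i=\tau_i$ for $1\le i\le n-1$; it is a Coxeter group with generators $S=\{t_0,\dots,t_{n-1}\}$. For $w\in\mathfrak D_n$, $S(w)$ is the set of generators appearing in a (any) reduced expression of $w$ in $\mathfrak D_n$, and $C(w)=S\setminus S(w)$. *)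

theory Defs
  imports Main
begin

text \<open>Signed permutations are represented as functions int => int
  (fixing 0 and everything outside [-n,n]); the group product is function
  composition, (v w)(x) = v (w x).\<close>

definition tau0 :: "int \<Rightarrow> int" where
  "tau0 x = (if x = 1 then -1 else if x = -1 then 1 else x)"

definition tau :: "nat \<Rightarrow> int \<Rightarrow> int" where
  "tau i x = (if x = int i then int i + 1 else if x = int i + 1 then int i
              else if x = - int i then - int i - 1 else if x = - int i - 1 then - int i else x)"

definition tgen :: "nat \<Rightarrow> int \<Rightarrow> int" where
  "tgen i = (if i = 0 then tau0 \<circ> tau 1 \<circ> tau0 else tau i)"

definition word_prod :: "nat list \<Rightarrow> int \<Rightarrow> int" where
  "word_prod ws = foldr (\<lambda>i f. tgen i \<circ> f) ws id"

definition words :: "nat \<Rightarrow> nat list set" where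
  "words n = {ws. set ws \<subseteq> {0..<n}}"

text \<open>D_n: the subgroup generated by t_0,...,t_{n-1}; as the generators are
  involutions, this is the set of all products of generators.\<close>
definition Dn :: "nat \<Rightarrow> (int \<Rightarrow> int) set" where
  "Dn n = word_prod ` words n"

definition Gens :: "nat \<Rightarrow> (int \<Rightarrow> int) set" where
  "Gens n = tgen ` {0..<n}"

definition lenD :: "nat \<Rightarrow> (int \<Rightarrow> int) \<Rightarrow> nat" where
  "lenD n w = (LEAST l. \<exists>ws \<in> words n. word_prod ws = w \<and> length ws = l)"

definition reduced_words :: "nat \<Rightarrow> (int \<Rightarrow> int) \<Rightarrow> nat list set" where
  "reduced_words n w = {ws \<in> words n. word_prod ws = w \<and> length ws = lenD n w}"

definition supp :: "nat \<Rightarrow> (int \<Rightarrow> int) \<Rightarrow> (int \<Rightarrow> int) set" where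
  "supp n w = {tgen i | i. \<exists>ws \<in> reduced_words n w. i \<in> set ws}"

definition cosupp :: "nat \<Rightarrow> (int \<Rightarrow> int) \<Rightarrow> (int \<Rightarrow> int) set" where
  "cosupp n w = Gens n - supp n w"

end

theory Submission
  imports Defs
begin

lemma tgen0: "tgen 0 x = (if x = 1 then -2 else if x = 2 then -1 else if x = -1 then 2 else if x = -2 then 1 else x)"
  by (auto simp: tgen_def tau0_def tau_def)

lemma tgenS: "m \<noteq> 0 \<Longrightarrow> tgen m x = (if x = int m then int m + 1 else if x = int m + 1 then int m
              else if x = - int m then - int m - 1 else if x = - int m - 1 then - int m else x)"
  by (auto simp: tgen_def tau_def)

lemma tgen_invol: "tgen m (tgen m x) = x"
  by (cases "m = 0") (auto simp: tgen0 tgenS)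

lemma tgen_comp_invol: "tgen m \<circ> tgen m = id"
  by (auto simp: tgen_invol)

lemma tgen_odd: "tgen m (-x) = - tgen m x"
  by (cases "m = 0") (auto simp: tgen0 tgenS)

lemma tgen_range: "2 \<le> n \<Longrightarrow> m < n \<Longrightarrow> 0 < \<bar>x\<bar> \<Longrightarrow> \<bar>x\<bar> \<le> int n \<Longrightarrow> 0 < \<bar>tgen m x\<bar> \<and> \<bar>tgen m x\<bar> \<le> int n"
  by (cases "m = 0") (auto simp: tgen0 tgenS)

lemma tgen_range2: "2 \<le> n \<Longrightarrow> m < n \<Longrightarrow> \<bar>x\<bar> \<le> int n \<Longrightarrow> \<bar>tgen m x\<bar> \<le> int n"
  by (cases "m = 0") (auto simp: tgen0 tgenS)

lemma tgen_fix: "2 \<le> n \<Longrightarrow> m < n \<Longrightarrow> int n < \<bar>x\<bar> \<Longrightarrow> tgen m x = x"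
  by (cases "m = 0") (auto simp: tgen0 tgenS)

lemma tgen_bij: "bij (tgen m)"
  by (metis bij_betw_imageI inj_on_inverseI surj_def tgen_invol)

definition Rr :: "nat \<Rightarrow> (int \<times> int) set" where
 "Rr n = {(x,y). 0 < \<bar>x\<bar> \<and> \<bar>x\<bar> \<le> int n \<and> 0 < \<bar>y\<bar> \<and> \<bar>y\<bar> \<le> int n \<and> y < x \<and> x \<noteq> -y}"

definition Inv :: "nat \<Rightarrow> (int \<Rightarrow> int) \<Rightarrow> (int \<times> int) set" where
  "Inv n w = {(x,y) \<in> Rr n. w x < w y}"

definition Fl :: "nat \<Rightarrow> (int \<times> int) set" where
  "Fl m = (if m = 0 then {(1,-2),(2,-1)} else {(int m+1, int m), (- int m, - int m - 1)})"

lemma tgen_order: assumes "y < x" "x \<noteq> -y" "x \<noteq> 0" "y \<noteq> 0" "(x,y) \<notin> Fl m" shows "tgen m y < tgen m x"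
proof (cases "m = 0")
  case True
  then have f: "\<not> (x = 1 \<and> y = -2)" "\<not> (x = 2 \<and> y = -1)" using assms(5) by (auto simp: Fl_def)
  show ?thesis unfolding True tgen0 using assms(1-4) f by (simp split: if_split) auto
next
  case False
  define k where "k = int m"
  have k: "k \<ge> 1" using False by (simp add: k_def)
  have f: "\<not> (x = k + 1 \<and> y = k)" "\<not> (x = - k \<and> y = - k - 1)" using assms(5) False by (auto simp: Fl_def k_def)
  have cx: "x = k \<or> x = k+1 \<or> x = -k \<or> x = -k-1 \<or> (x \<noteq> k \<and> x \<noteq> k+1 \<and> x \<noteq> -k \<and> x \<noteq> -k-1)" by blast
  have cy: "y = k \<or> y = k+1 \<or> y = -k \<or> y = -k-1 \<or> (y \<noteq> k \<and> y \<noteq> k+1 \<and> y \<noteq> -k \<and> y \<noteq> -k-1)" by blast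
  show ?thesis unfolding tgenS[OF False] k_def[symmetric] using assms(1-4) f k
    by (insert cx cy, elim disjE; simp)
qed

lemma tgen_flip: assumes "(x,y) \<in> Fl m" shows "tgen m x = y \<and> tgen m y = x"
proof (cases "m = 0")
  case True
  then have "(x = 1 \<and> y = -2) \<or> (x = 2 \<and> y = -1)" using assms by (simp add: Fl_def)
  then show ?thesis proof
    assume "x = 1 \<and> y = -2" then show ?thesis using True by (simp add: tgen0)
  next
    assume "x = 2 \<and> y = -1" then show ?thesis using True by (simp add: tgen0)
  qed
next
  case False
  then have "(x = int m + 1 \<and> y = int m) \<or> (x = - int m \<and> y = - int m - 1)" using assms by (simp add: Fl_def)
  then show ?thesis proof
    assume "x = int m + 1 \<and> y = int m" then show ?thesis using False by (simp add: tgenS)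
  next
    assume "x = - int m \<and> y = - int m - 1" then show ?thesis using False by (simp add: tgenS)
  qed
qed

lemma Fl_Rr: "2 \<le> n \<Longrightarrow> m < n \<Longrightarrow> Fl m \<subseteq> Rr n"
  by (cases "m = 0") (auto simp: Fl_def Rr_def)

lemma card_Fl: "card (Fl m) = 2"
  by (auto simp: Fl_def)

lemma finite_Rr: "finite (Rr n)"
proof -
  have "Rr n \<subseteq> {- int n..int n} \<times> {- int n..int n}" by (auto simp: Rr_def)
  then show ?thesis by (rule finite_subset) auto
qed

lemma finite_Inv: "finite (Inv n w)"
  unfolding Inv_def by (rule finite_subset[OF _ finite_Rr]) auto

lemma word_prod_append: "word_prod (a @ b) = word_prod a \<circ> word_prod b"
  unfolding word_prod_def by (induction a) (simp_all add: comp_assoc)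

lemma word_prod_Nil: "word_prod [] = id"
  unfolding word_prod_def by simp

lemma word_prod_single: "word_prod [m] = tgen m"
  unfolding word_prod_def by simp

lemma word_prod_snoc: "word_prod (a @ [m]) = word_prod a \<circ> tgen m"
  by (simp only: word_prod_append word_prod_single)

lemma word_prod_Cons: "word_prod (m # a) = tgen m \<circ> word_prod a"
  by (simp add: word_prod_def)


definition sp :: "nat \<Rightarrow> (int \<Rightarrow> int) \<Rightarrow> int" where
  "sp n w = (\<Prod>k\<in>{1..int n}. sgn (w k))"

lemma sp_comp: assumes "2 \<le> n" "m < n" "\<forall>x. w (-x) = - w x" shows "sp n (w \<circ> tgen m) = sp n w"
proof (cases "m = 0")
  case True
  have e: "{1..int n} = insert 1 (insert 2 {3..int n})" using assms(1) by auto
  have p: "(\<Prod>k\<in>{3..int n}. sgn (w (tgen 0 k))) = (\<Prod>k\<in>{3..int n}. sgn (w k))"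
    by (rule prod.cong) (auto simp: tgen0)
  have "sp n (w \<circ> tgen m) = sgn (w (tgen 0 1)) * (sgn (w (tgen 0 2)) * (\<Prod>k\<in>{3..int n}. sgn (w (tgen 0 k))))"
    unfolding sp_def e using True by simp
  also have "\<dots> = sgn (w (-2)) * (sgn (w (-1)) * (\<Prod>k\<in>{3..int n}. sgn (w k)))"
    unfolding p by (simp add: tgen0)
  also have "\<dots> = sgn (w 1) * (sgn (w 2) * (\<Prod>k\<in>{3..int n}. sgn (w k)))"
    using assms(3)[rule_format, of 1] assms(3)[rule_format, of 2] by (simp add: sgn_minus)
  also have "\<dots> = sp n w" unfolding sp_def e by simp
  finally show ?thesis .
next
  case False
  have b: "bij_betw (tgen m) {1..int n} {1..int n}"
  proof (rule bij_betw_byWitness[where f'="tgen m"])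
    show "tgen m ` {1..int n} \<subseteq> {1..int n}" "tgen m ` {1..int n} \<subseteq> {1..int n}"
      using False assms by (auto simp: tgenS)
  qed (auto simp: tgen_invol)
  show ?thesis unfolding sp_def
    using prod.reindex_bij_betw[OF b, of "\<lambda>k. sgn (w k)"] by simp
qed

definition sperm :: "nat \<Rightarrow> (int \<Rightarrow> int) \<Rightarrow> bool" where
  "sperm n w \<longleftrightarrow> (\<forall>x. w (-x) = - w x) \<and> bij w \<and> (\<forall>x. int n < \<bar>x\<bar> \<longrightarrow> w x = x)
     \<and> (\<forall>x. \<bar>x\<bar> \<le> int n \<longrightarrow> \<bar>w x\<bar> \<le> int n) \<and> sp n w = 1"

lemma sperm_id: "sperm n id"
  by (auto simp: sperm_def sp_def)

lemma sperm_comp: assumes "2 \<le> n" "m < n" "sperm n w" shows "sperm n (w \<circ> tgen m)"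
  using assms sp_comp[OF assms(1,2)] tgen_odd tgen_fix[OF assms(1,2)] tgen_range2[OF assms(1,2)]
    bij_comp[OF tgen_bij]
  unfolding sperm_def by auto

lemma words_snoc: "a @ [m] \<in> words n \<longleftrightarrow> a \<in> words n \<and> m < n"
  by (auto simp: words_def)

lemma sperm_comp_word: assumes "2 \<le> n" "ws \<in> words n" "sperm n w" shows "sperm n (w \<circ> word_prod ws)"
  using assms(2)
proof (induction ws rule: rev_induct)
  case Nil then show ?case using assms(3) by (simp add: word_prod_Nil)
next
  case (snoc m a)
  then have a: "a \<in> words n" "m < n" by (simp_all add: words_snoc)
  have "sperm n ((w \<circ> word_prod a) \<circ> tgen m)" by (rule sperm_comp[OF assms(1) a(2) snoc.IH[OF a(1)]])
  then show ?case by (simp only: word_prod_snoc comp_assoc)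
qed

lemma sperm_word: assumes "2 \<le> n" "ws \<in> words n" shows "sperm n (word_prod ws)"
  using sperm_comp_word[OF assms sperm_id] by simp

lemma sperm_Dn: "2 \<le> n \<Longrightarrow> w \<in> Dn n \<Longrightarrow> sperm n w"
  using sperm_word by (auto simp: Dn_def)


lemma Fl_cases: assumes "\<And>p q. Fl m = {(p,q), (-q,-p)} \<Longrightarrow> P" shows P
proof (cases "m = 0")
  case True then show ?thesis using assms[of 1 "-2"] by (simp add: Fl_def insert_commute)
next
  case False then show ?thesis using assms[of "int m + 1" "int m"] by (simp add: Fl_def)
qed

lemma K1: assumes "\<forall>x. w (-x) = - w x"
  shows "Fl m \<subseteq> Inv n w \<or> Fl m \<inter> Inv n w = {}"
proof (rule Fl_cases[of m])
  fix p q assume e: "Fl m = {(p,q), (-q,-p)}"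
  have "(p,q) \<in> Rr n \<longleftrightarrow> (-q,-p) \<in> Rr n" by (auto simp: Rr_def)
  moreover have "w p < w q \<longleftrightarrow> w (-q) < w (-p)" using assms by simp
  ultimately show ?thesis unfolding e Inv_def by auto
qed

lemma K_F: assumes "2 \<le> n" "m < n" "inj w"
  shows "Inv n (w \<circ> tgen m) \<inter> Fl m = Fl m - Inv n w"
proof -
  have "(x,y) \<in> Inv n (w \<circ> tgen m) \<longleftrightarrow> (x,y) \<notin> Inv n w" if "(x,y) \<in> Fl m" for x y
  proof -
    have r: "(x,y) \<in> Rr n" using that Fl_Rr[OF assms(1,2)] by auto
    then have "x \<noteq> y" by (auto simp: Rr_def)
    then have "w x \<noteq> w y" using assms(3) by (metis injD)
    then show ?thesis using r tgen_flip[OF that] by (auto simp: Inv_def)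
  qed
  then show ?thesis by auto
qed

definition sig :: "nat \<Rightarrow> int \<times> int \<Rightarrow> int \<times> int" where
  "sig m = (\<lambda>(x,y). (tgen m x, tgen m y))"

lemma sig_invol: "sig m (sig m z) = z"
  by (cases z) (simp add: sig_def tgen_invol)

lemma sig_Rr: assumes "2 \<le> n" "m < n" "z \<in> Rr n" "z \<notin> Fl m"
  shows "sig m z \<in> Rr n" "sig m z \<notin> Fl m"
proof -
  obtain x y where z: "z = (x,y)" by (cases z)
  have r: "0 < \<bar>x\<bar>" "\<bar>x\<bar> \<le> int n" "0 < \<bar>y\<bar>" "\<bar>y\<bar> \<le> int n" "y < x" "x \<noteq> -y"
    using assms(3) z by (auto simp: Rr_def)
  have o: "tgen m y < tgen m x" using tgen_order[of y x m] r assms(4) z by auto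
  have "tgen m x \<noteq> - tgen m y" using r tgen_odd[of m y] tgen_invol[of m]
    by (metis minus_minus)
  then show "sig m z \<in> Rr n" using o r tgen_range[OF assms(1,2)] z by (auto simp: Rr_def sig_def)
  show "sig m z \<notin> Fl m"
  proof
    assume "sig m z \<in> Fl m"
    then have "(tgen m x, tgen m y) \<in> Fl m" by (simp add: z sig_def)
    from tgen_flip[OF this] have "tgen m y = tgen m (tgen m x)" by simp
    then have "x = tgen m y" by (simp add: tgen_invol)
    moreover from tgen_flip[OF \<open>(tgen m x, tgen m y) \<in> Fl m\<close>] have "tgen m x = tgen m (tgen m y)" by simp
    then have "y = tgen m x" by (simp add: tgen_invol)
    ultimately show False using o r by simp
  qed
qed

lemma K_nF: assumes "2 \<le> n" "m < n"
  shows "Inv n (w \<circ> tgen m) - Fl m = sig m ` (Inv n w - Fl m)"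
proof
  show "Inv n (w \<circ> tgen m) - Fl m \<subseteq> sig m ` (Inv n w - Fl m)"
  proof
    fix z assume z: "z \<in> Inv n (w \<circ> tgen m) - Fl m"
    obtain x y where zz: "z = (x,y)" by (cases z)
    have "sig m z \<in> Inv n w - Fl m" using z sig_Rr[OF assms, of z]
      by (auto simp: Inv_def sig_def zz)
    then show "z \<in> sig m ` (Inv n w - Fl m)" using sig_invol[of m z] by force
  qed
next
  show "sig m ` (Inv n w - Fl m) \<subseteq> Inv n (w \<circ> tgen m) - Fl m"
  proof
    fix z assume "z \<in> sig m ` (Inv n w - Fl m)"
    then obtain z' where z': "z' \<in> Inv n w - Fl m" "z = sig m z'" by auto
    obtain x y where zz: "z' = (x,y)" by (cases z')
    show "z \<in> Inv n (w \<circ> tgen m) - Fl m" using z' sig_Rr[OF assms, of z']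
      by (auto simp: Inv_def sig_def zz tgen_invol)
  qed
qed

lemma K_card: assumes "2 \<le> n" "m < n" "sperm n w"
  shows "Fl m \<inter> Inv n w = {} \<Longrightarrow> card (Inv n (w \<circ> tgen m)) = card (Inv n w) + 2"
    and "Fl m \<subseteq> Inv n w \<Longrightarrow> card (Inv n (w \<circ> tgen m)) + 2 = card (Inv n w)"
proof -
  have inj: "inj w" using assms(3) by (auto simp: sperm_def bij_def)
  have si: "inj_on (sig m) A" for A by (metis inj_onI sig_invol)
  have c1: "card (Inv n (w \<circ> tgen m) - Fl m) = card (Inv n w - Fl m)"
    unfolding K_nF[OF assms(1,2)] by (rule card_image[OF si])
  have sp1: "card (Inv n v) = card (Inv n v - Fl m) + card (Inv n v \<inter> Fl m)" for v
  proof -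
    have e: "Inv n v = (Inv n v - Fl m) \<union> (Inv n v \<inter> Fl m)" by blast
    have "card ((Inv n v - Fl m) \<union> (Inv n v \<inter> Fl m)) = card (Inv n v - Fl m) + card (Inv n v \<inter> Fl m)"
      by (rule card_Un_disjoint) (use finite_Inv[of n v] in auto)
    then show ?thesis using e by simp
  qed
  have fF: "finite (Fl m)" by (auto simp: Fl_def)
  {
    assume "Fl m \<inter> Inv n w = {}"
    then have "Inv n (w \<circ> tgen m) \<inter> Fl m = Fl m" "Inv n w \<inter> Fl m = {}"
      using K_F[OF assms(1,2) inj] by auto
    then show "card (Inv n (w \<circ> tgen m)) = card (Inv n w) + 2"
      using sp1[of "w \<circ> tgen m"] sp1[of w] c1 card_Fl[of m] by simp
  }
  {
    assume "Fl m \<subseteq> Inv n w"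
    then have "Inv n (w \<circ> tgen m) \<inter> Fl m = {}" "Inv n w \<inter> Fl m = Fl m"
      using K_F[OF assms(1,2) inj] by auto
    then show "card (Inv n (w \<circ> tgen m)) + 2 = card (Inv n w)"
      using sp1[of "w \<circ> tgen m"] sp1[of w] c1 card_Fl[of m] by simp
  }
qed

lemma K_le: assumes "2 \<le> n" "m < n" "sperm n w"
  shows "card (Inv n (w \<circ> tgen m)) \<le> card (Inv n w) + 2"
  using K1[of w m n] K_card[OF assms] assms(3) by (auto simp: sperm_def)

lemma L1: assumes "2 \<le> n" "b \<in> words n" "sperm n w"
  shows "card (Inv n (w \<circ> word_prod b)) \<le> card (Inv n w) + 2 * length b"
  using assms(2)
proof (induction b rule: rev_induct)
  case Nil then show ?case by (simp add: word_prod_Nil)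
next
  case (snoc m a)
  then have a: "a \<in> words n" "m < n" by (auto simp: words_snoc)
  have sa: "sperm n (w \<circ> word_prod a)" 
    by (rule sperm_comp_word[OF assms(1) a(1) assms(3)])
  have e: "w \<circ> word_prod (a @ [m]) = (w \<circ> word_prod a) \<circ> tgen m"
    by (simp only: word_prod_snoc comp_assoc)
  have l: "2 * length (a @ [m]) = 2 * length a + 2" by simp
  show ?case unfolding e l using K_le[OF assms(1) a(2) sa] snoc.IH[OF a(1)]
    by linarith

qed


lemma sperm_props: assumes "sperm n w"
  shows "\<And>x. w (-x) = - w x" "inj w" "surj w" "\<And>x. int n < \<bar>x\<bar> \<Longrightarrow> w x = x"
    "\<And>x. \<bar>x\<bar> \<le> int n \<Longrightarrow> \<bar>w x\<bar> \<le> int n" "sp n w = 1" "w 0 = 0"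
proof -
  show o: "\<And>x. w (-x) = - w x" using assms by (simp add: sperm_def)
  show "inj w" "surj w" using assms by (simp_all add: sperm_def bij_def)
  show "\<And>x. int n < \<bar>x\<bar> \<Longrightarrow> w x = x" "\<And>x. \<bar>x\<bar> \<le> int n \<Longrightarrow> \<bar>w x\<bar> \<le> int n" "sp n w = 1"
    using assms by (simp_all add: sperm_def)
  show "w 0 = 0" using o[of 0] by simp
qed

lemma sperm_nz: assumes "sperm n w" "x \<noteq> 0" shows "w x \<noteq> 0"
  using sperm_props(2,7)[OF assms(1)] assms(2) by (metis injD)

lemma sp_one_neg: assumes "sperm n u" "1 \<le> k" "k \<le> int n" "u k < 0"
  "\<And>l. 1 \<le> l \<Longrightarrow> l \<le> int n \<Longrightarrow> l \<noteq> k \<Longrightarrow> 0 < u l" shows False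
proof -
  have "sp n u = sgn (u k) * (\<Prod>l\<in>{1..int n} - {k}. sgn (u l))"
    unfolding sp_def using assms(2,3) by (subst prod.remove[of _ k]) auto
  also have "(\<Prod>l\<in>{1..int n} - {k}. sgn (u l)) = 1"
    by (rule prod.neutral) (use assms(5) in auto)
  finally have "sp n u = -1" using assms(4) by simp
  then show False using sperm_props(6)[OF assms(1)] by simp
qed

lemma descent: assumes "2 \<le> n" "sperm n w" "\<forall>m<n. Fl m \<inter> Inv n w = {}" shows "w = id"
proof -
  note P = sperm_props[OF assms(2)]
  have notinv: "w y \<le> w x" if "(x,y) \<in> Fl m" "m < n" for x y m
  proof -
    have "(x,y) \<in> Rr n" using that Fl_Rr[OF assms(1)] by blast
    moreover have "(x,y) \<notin> Inv n w" using assms(3) that by blast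
    ultimately show ?thesis by (auto simp: Inv_def)
  qed
  have inc: "w (int m) < w (int m + 1)" if "1 \<le> m" "m < n" for m
  proof -
    have "(int m + 1, int m) \<in> Fl m" using that by (simp add: Fl_def)
    from notinv[OF this that(2)] have "w (int m) \<le> w (int m + 1)" .
    moreover have "w (int m) \<noteq> w (int m + 1)" using P(2) by (metis injD n_not_Suc_n of_nat_Suc of_nat_eq_iff add.commute)
    ultimately show ?thesis by simp
  qed
  have b12: "- w 1 < w 2"
  proof -
    have "(2, -1) \<in> Fl 0" by (simp add: Fl_def)
    from notinv[OF this] assms(1) have "w (-1) \<le> w 2" by simp
    moreover have "w (-1) \<noteq> w 2" using P(2) by (metis injD numeral_One zero_neq_numeral neg_equal_iff_equal add.inverse_inverse
          verit_minus_simplify(4) one_neq_neg_numeral)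
    ultimately show ?thesis using P(1)[of 1] by simp
  qed
  have i12: "w 1 < w 2" using inc[of 1] assms(1) by simp
  have w1: "w 1 \<noteq> 0" using sperm_nz[OF assms(2)] by simp
  have lo: "\<forall>j. 2 + j \<le> n \<longrightarrow> int (2 + j) \<le> w (int (2 + j))"
  proof
    fix j show "2 + j \<le> n \<longrightarrow> int (2 + j) \<le> w (int (2 + j))"
    proof (induction j)
      case 0 then show ?case using b12 i12 w1 by simp
    next
      case (Suc j)
      show ?case
      proof
        assume a: "2 + Suc j \<le> n"
        then have "w (int (2 + j)) < w (int (2 + j) + 1)" using inc[of "2 + j"] by simp
        then show "int (2 + Suc j) \<le> w (int (2 + Suc j))" using Suc a by simp
      qed
    qed
  qed
  have hi: "\<forall>j. j + 2 \<le> n \<longrightarrow> w (int n - int j) \<le> int n - int j"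
  proof
    fix j show "j + 2 \<le> n \<longrightarrow> w (int n - int j) \<le> int n - int j"
    proof (induction j)
      case 0 then show ?case using P(5)[of "int n"] by (simp add: abs_le_iff)
    next
      case (Suc j)
      show ?case
      proof
        assume a: "Suc j + 2 \<le> n"
        have "w (int (n - Suc j)) < w (int (n - Suc j) + 1)" using inc[of "n - Suc j"] a by simp
        moreover have "int (n - Suc j) = int n - int (Suc j)" "int (n - Suc j) + 1 = int n - int j" using a by simp_all
        ultimately show "w (int n - int (Suc j)) \<le> int n - int (Suc j)" using Suc a by simp
      qed
    qed
  qed
  have mid: "w k = k" if "2 \<le> k" "k \<le> int n" for k
  proof -
    have "k \<le> w k" using lo[rule_format, of "nat k - 2"] that by simp
    moreover have "w k \<le> k" using hi[rule_format, of "n - nat k"] that by simp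
    ultimately show ?thesis by simp
  qed
  have w2: "w 2 = 2" using mid[of 2] assms(1) by simp
  have a1: "w 1 = 1 \<or> w 1 = -1" using b12 i12 w1 w2 by linarith
  have "w 1 = 1"
  proof (rule ccontr)
    assume "w 1 \<noteq> 1"
    then have "w 1 = -1" using a1 by simp
    then show False using sp_one_neg[OF assms(2), of 1] mid assms(1) by force
  qed
  show "w = id"
  proof
    fix x
    consider "x = 0" | "1 \<le> x \<and> x \<le> int n" | "1 \<le> -x \<and> -x \<le> int n" | "int n < \<bar>x\<bar>" by linarith
    then show "w x = id x"
    proof cases
      case 1 then show ?thesis using P(7) by simp
    next
      case 2 then show ?thesis using mid[of x] \<open>w 1 = 1\<close> by (cases "x = 1") auto
    next
      case 3 then have "w (-x) = -x" using mid[of "-x"] \<open>w 1 = 1\<close> by (cases "-x = 1") auto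
      then show ?thesis using P(1)[of "-x"] by simp
    next
      case 4 then show ?thesis using P(4) by simp
    qed
  qed
qed

lemma Inv_id: "Inv n id = {}"
  by (auto simp: Inv_def Rr_def)

lemma L3: assumes "2 \<le> n" "w \<in> Dn n"
  shows "\<exists>ws\<in>words n. word_prod ws = w \<and> 2 * length ws = card (Inv n w)"
  using assms(2)
proof (induction "card (Inv n w)" arbitrary: w rule: less_induct)
  case less
  have sw: "sperm n w" using sperm_Dn[OF assms(1) less.prems] .
  show ?case
  proof (cases "\<forall>m<n. Fl m \<inter> Inv n w = {}")
    case True
    then have "w = id" using descent[OF assms(1) sw] by blast
    then show ?thesis by (intro bexI[of _ "[]"]) (auto simp: words_def word_prod_Nil Inv_id)
  next
    case False
    then obtain m where m: "m < n" "Fl m \<inter> Inv n w \<noteq> {}" by blast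
    then have fm: "Fl m \<subseteq> Inv n w" using K1[of w m n] sperm_props(1)[OF sw] by blast
    have c: "card (Inv n (w \<circ> tgen m)) + 2 = card (Inv n w)" using K_card(2)[OF assms(1) m(1) sw fm] .
    obtain ws0 where ws0: "ws0 \<in> words n" "word_prod ws0 = w" using less.prems by (auto simp: Dn_def)
    have "w \<circ> tgen m \<in> Dn n" unfolding Dn_def
      using ws0 m(1) by (intro image_eqI[of _ _ "ws0 @ [m]"]) (auto simp: word_prod_snoc words_snoc)
    from less.hyps[OF _ this] c obtain ws' where ws': "ws' \<in> words n" "word_prod ws' = w \<circ> tgen m"
      "2 * length ws' = card (Inv n (w \<circ> tgen m))" by auto
    have "word_prod (ws' @ [m]) = w"
      using ws'(2) by (simp add: word_prod_snoc comp_assoc tgen_comp_invol)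
    moreover have "ws' @ [m] \<in> words n" using ws'(1) m(1) by (simp add: words_snoc)
    ultimately show ?thesis using ws'(3) c by (intro bexI[of _ "ws' @ [m]"]) auto
  qed
qed

lemma lenD_props: assumes "2 \<le> n" "w \<in> Dn n"
  shows "2 * lenD n w = card (Inv n w)"
    and "\<exists>ws. ws \<in> reduced_words n w"
    and "\<And>ws. ws \<in> words n \<Longrightarrow> word_prod ws = w \<Longrightarrow> lenD n w \<le> length ws"
proof -
  show le: "\<And>ws. ws \<in> words n \<Longrightarrow> word_prod ws = w \<Longrightarrow> lenD n w \<le> length ws"
    unfolding lenD_def by (rule Least_le) auto
  obtain ws0 where ws0: "ws0 \<in> words n" "word_prod ws0 = w" "2 * length ws0 = card (Inv n w)"
    using L3[OF assms] by blast
  have "\<exists>ws\<in>words n. word_prod ws = w \<and> length ws = lenD n w"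
    unfolding lenD_def by (rule LeastI[of _ "length ws0"]) (use ws0 in auto)
  then obtain ws1 where ws1: "ws1 \<in> words n" "word_prod ws1 = w" "length ws1 = lenD n w" by blast
  then show "\<exists>ws. ws \<in> reduced_words n w" by (auto simp: reduced_words_def)
  have "card (Inv n (id \<circ> word_prod ws1)) \<le> card (Inv n id) + 2 * length ws1"
    by (rule L1[OF assms(1) ws1(1) sperm_id])
  then have "card (Inv n w) \<le> 2 * lenD n w" using ws1 by (simp add: Inv_id)
  moreover have "lenD n w \<le> length ws0" using le[OF ws0(1,2)] .
  ultimately show "2 * lenD n w = card (Inv n w)" using ws0(3) by simp
qed

definition cl :: "nat \<Rightarrow> int \<Rightarrow> int" where
  "cl i x = (if i = 0 then (if 0 < x then 1 else 0)
             else if i = 1 then (if x = -1 \<or> 2 \<le> x then 1 else 0)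
             else if \<bar>x\<bar> \<le> int i then 0 else if 0 < x then 1 else 2)"

definition Pset :: "nat \<Rightarrow> nat \<Rightarrow> (int \<times> int) set" where
  "Pset n i = {(x,y) \<in> Rr n. cl i x \<noteq> cl i y}"

lemma cl_tgen: assumes "m \<noteq> i" shows "cl i (tgen m x) = cl i x"
proof (cases "m = 0")
  case True
  then have i: "i \<noteq> 0" using assms by simp
  consider "x = 1" | "x = 2" | "x = -1" | "x = -2" | "x \<noteq> 1 \<and> x \<noteq> 2 \<and> x \<noteq> -1 \<and> x \<noteq> -2" by blast
  then show ?thesis
  proof cases
    case 5 then show ?thesis using True by (simp add: tgen0)
  qed (use True i in \<open>simp_all add: tgen0 cl_def\<close>)
next
  case False
  define k where "k = int m"
  have k: "1 \<le> k" using False by (simp add: k_def)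
  have ik: "int i \<noteq> k" using assms by (simp add: k_def)
  consider "x = k" | "x = k + 1" | "x = -k" | "x = -k-1" | "x \<noteq> k \<and> x \<noteq> k+1 \<and> x \<noteq> -k \<and> x \<noteq> -k-1" by blast
  then show ?thesis
  proof cases
    case 5 then show ?thesis using False by (simp add: tgenS k_def)
  next
    case 1 then show ?thesis using False k ik unfolding tgenS[OF False] k_def[symmetric] cl_def by auto
  next
    case 2 then show ?thesis using False k ik unfolding tgenS[OF False] k_def[symmetric] cl_def by auto
  next
    case 3 then show ?thesis using False k ik unfolding tgenS[OF False] k_def[symmetric] cl_def by auto
  next
    case 4 then show ?thesis using False k ik unfolding tgenS[OF False] k_def[symmetric] cl_def by auto
  qed
qed

lemma Fl_Pset_disj: assumes "m \<noteq> i" shows "Fl m \<inter> Pset n i = {}"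
proof -
  have "cl i x = cl i y" if "(x,y) \<in> Fl m" for x y
    using tgen_flip[OF that] cl_tgen[OF assms, of x] by simp
  then show ?thesis by (auto simp: Pset_def)
qed

lemma Fl_Pset: assumes "2 \<le> n" "i < n" shows "Fl i \<subseteq> Pset n i"
proof -
  have "cl i x \<noteq> cl i y" if "(x,y) \<in> Fl i" for x y
  proof (cases "i = 0")
    case True then show ?thesis using that by (auto simp: Fl_def cl_def)
  next
    case False
    then have "(x = int i + 1 \<and> y = int i) \<or> (x = - int i \<and> y = - int i - 1)" using that by (simp add: Fl_def)
    then show ?thesis using False by (auto simp: cl_def)
  qed
  then show ?thesis using Fl_Rr[OF assms] by (auto simp: Pset_def)
qed

lemma NP1: assumes "2 \<le> n" "m < n" "m \<noteq> i" "z \<in> Inv n w \<inter> Pset n i"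
  shows "sig m z \<in> Inv n (w \<circ> tgen m) \<inter> Pset n i"
proof -
  obtain x y where z: "z = (x,y)" by (cases z)
  have zr: "z \<in> Rr n" "z \<notin> Fl m" using assms(4) Fl_Pset_disj[OF assms(3), of n] by (auto simp: Inv_def)
  have "sig m z \<in> Rr n" using sig_Rr(1)[OF assms(1,2) zr] .
  moreover have "cl i x \<noteq> cl i y" using assms(4) z by (auto simp: Pset_def)
  moreover have "w x < w y" using assms(4) z by (auto simp: Inv_def)
  ultimately show ?thesis using z cl_tgen[OF assms(3)] by (auto simp: sig_def Pset_def Inv_def tgen_invol)
qed

lemma NP_step: assumes "2 \<le> n" "m < n" "m \<noteq> i"
  shows "Inv n (w \<circ> tgen m) \<inter> Pset n i = {} \<longleftrightarrow> Inv n w \<inter> Pset n i = {}"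
proof
  assume a: "Inv n (w \<circ> tgen m) \<inter> Pset n i = {}"
  show "Inv n w \<inter> Pset n i = {}"
  proof (rule ccontr)
    assume "Inv n w \<inter> Pset n i \<noteq> {}"
    then obtain z where "z \<in> Inv n w \<inter> Pset n i" by blast
    from NP1[OF assms this] a show False by blast
  qed
next
  assume a: "Inv n w \<inter> Pset n i = {}"
  show "Inv n (w \<circ> tgen m) \<inter> Pset n i = {}"
  proof (rule ccontr)
    assume "Inv n (w \<circ> tgen m) \<inter> Pset n i \<noteq> {}"
    then obtain z where "z \<in> Inv n (w \<circ> tgen m) \<inter> Pset n i" by blast
    from NP1[OF assms this] a show False by (simp add: comp_assoc tgen_comp_invol)
  qed
qed

lemma NP_word: assumes "2 \<le> n" "set ws \<subseteq> {0..<n}" "i \<notin> set ws"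
  shows "Inv n (w \<circ> word_prod ws) \<inter> Pset n i = {} \<longleftrightarrow> Inv n w \<inter> Pset n i = {}"
  using assms(2,3)
proof (induction ws arbitrary: w)
  case Nil then show ?case by (simp add: word_prod_Nil)
next
  case (Cons m ws)
  have e: "w \<circ> word_prod (m # ws) = (w \<circ> tgen m) \<circ> word_prod ws" by (simp add: word_prod_Cons comp_assoc)
  have m: "m < n" "m \<noteq> i" "set ws \<subseteq> {0..<n}" "i \<notin> set ws" using Cons.prems by auto
  have "Inv n (w \<circ> word_prod (m # ws)) \<inter> Pset n i = {} \<longleftrightarrow> Inv n ((w \<circ> tgen m) \<circ> word_prod ws) \<inter> Pset n i = {}"
    by (simp only: e)
  also have "\<dots> \<longleftrightarrow> Inv n (w \<circ> tgen m) \<inter> Pset n i = {}" by (rule Cons.IH[OF m(3,4)])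
  also have "\<dots> \<longleftrightarrow> Inv n w \<inter> Pset n i = {}" by (rule NP_step[OF assms(1) m(1,2)])
  finally show ?case .
qed

lemma inS_iff: assumes "2 \<le> n" "u \<in> Dn n" "i < n"
  shows "(\<exists>ws\<in>reduced_words n u. i \<in> set ws) \<longleftrightarrow> Inv n u \<inter> Pset n i \<noteq> {}"
proof
  assume "\<exists>ws\<in>reduced_words n u. i \<in> set ws"
  then obtain ws where ws: "ws \<in> reduced_words n u" "i \<in> set ws" by blast
  then have wsw: "ws \<in> words n" "word_prod ws = u" "length ws = lenD n u" by (auto simp: reduced_words_def)
  obtain a b where ab: "ws = a @ i # b" "i \<notin> set b" using split_list_last[OF ws(2)] by blast
  have aw: "a \<in> words n" and bw: "b \<in> words n" using wsw(1) ab(1) by (auto simp: words_def)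
  define A where "A = word_prod a"
  define B where "B = word_prod b"
  have u: "u = (A \<circ> tgen i) \<circ> B" using wsw(2) ab(1) by (simp add: A_def B_def word_prod_append word_prod_Cons comp_assoc)
  have sA: "sperm n A" using sperm_word[OF assms(1) aw] by (simp add: A_def)
  have sAt: "sperm n (A \<circ> tgen i)" using sperm_comp[OF assms(1,3) sA] .
  have cu: "card (Inv n u) = 2 * length a + 2 + 2 * length b"
    using lenD_props(1)[OF assms(1,2)] wsw(3) ab(1) by simp
  have c1: "card (Inv n u) \<le> card (Inv n (A \<circ> tgen i)) + 2 * length b"
    using L1[OF assms(1) bw sAt] by (simp add: u B_def)
  have c2: "card (Inv n A) \<le> 2 * length a"
    using L1[OF assms(1) aw sperm_id] by (simp add: A_def Inv_id)
  have "Fl i \<subseteq> Inv n (A \<circ> tgen i)"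
  proof (rule ccontr)
    assume "\<not> Fl i \<subseteq> Inv n (A \<circ> tgen i)"
    then have "Fl i \<inter> Inv n A \<noteq> {}" using K_F[OF assms(1,3) sperm_props(2)[OF sA]] by blast
    then have "Fl i \<subseteq> Inv n A" using K1[of A i n] sperm_props(1)[OF sA] by blast
    from K_card(2)[OF assms(1,3) sA this] have "card (Inv n (A \<circ> tgen i)) + 2 = card (Inv n A)" .
    then show False using cu c1 c2 by linarith
  qed
  moreover have "Fl i \<noteq> {}" using card_Fl[of i] by auto
  ultimately have "Inv n (A \<circ> tgen i) \<inter> Pset n i \<noteq> {}"
    using Fl_Pset[OF assms(1,3)] by blast
  moreover have "set b \<subseteq> {0..<n}" using bw by (simp add: words_def)
  ultimately show "Inv n u \<inter> Pset n i \<noteq> {}"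
    using NP_word[OF assms(1) _ ab(2), of "A \<circ> tgen i"] by (simp add: u B_def)
next
  assume ne: "Inv n u \<inter> Pset n i \<noteq> {}"
  show "\<exists>ws\<in>reduced_words n u. i \<in> set ws"
  proof (rule ccontr)
    assume "\<not> ?thesis"
    moreover obtain ws where ws: "ws \<in> reduced_words n u" using lenD_props(2)[OF assms(1,2)] by blast
    ultimately have "i \<notin> set ws" by blast
    moreover have "set ws \<subseteq> {0..<n}" "word_prod ws = u" using ws by (auto simp: reduced_words_def words_def)
    ultimately have "Inv n (id \<circ> word_prod ws) \<inter> Pset n i = {}"
      using NP_word[OF assms(1), of ws i id] by (simp add: Inv_id)
    then show False using ne \<open>word_prod ws = u\<close> by simp
  qed
qed

lemma tgen_inj: assumes "tgen i = tgen j" shows "i = j"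
proof (rule ccontr)
  assume ne: "i \<noteq> j"
  {
    fix a b :: nat assume e: "tgen a = tgen b" "a \<noteq> b" "a = 0"
    have h: "tgen a 1 = tgen b 1" using e(1) by simp
    have "tgen a 1 = -2" using e(3) by (simp add: tgen0)
    then have "tgen b 1 = -2" using h by simp
    moreover have "b \<noteq> 0" using e by simp
    ultimately have False by (simp add: tgenS split: if_splits)
  } note z = this
  show False
  proof (cases "i = 0 \<or> j = 0")
    case True then show ?thesis using z assms ne by metis
  next
    case False
    have "tgen j (int i) = int i + 1" using fun_cong[OF assms, of "int i"] False by (simp add: tgenS)
    then show False using False ne by (simp add: tgenS split: if_splits)
  qed
qed

lemma cosupp_eq: assumes "2 \<le> n" "u \<in> Dn n"
  shows "cosupp n u = tgen ` {i. i < n \<and> Inv n u \<inter> Pset n i = {}}"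
proof -
  define S where "S = {i. \<exists>ws\<in>reduced_words n u. i \<in> set ws}"
  have inj: "inj tgen" by (rule injI) (rule tgen_inj)
  have "supp n u = tgen ` S" by (auto simp: supp_def S_def)
  then have "cosupp n u = tgen ` {0..<n} - tgen ` S" unfolding cosupp_def Gens_def by simp
  also have "\<dots> = tgen ` ({0..<n} - S)" by (rule image_set_diff[OF inj, symmetric])
  also have "{0..<n} - S = {i. i < n \<and> Inv n u \<inter> Pset n i = {}}"
    using inS_iff[OF assms] by (auto simp: S_def)
  finally show ?thesis .
qed

lemma noinv_iff: "Inv n u \<inter> Pset n i = {} \<longleftrightarrow> (\<forall>x y. (x,y) \<in> Rr n \<longrightarrow> cl i x \<noteq> cl i y \<longrightarrow> u y \<le> u x)"
proof
  assume e: "Inv n u \<inter> Pset n i = {}"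
  show "\<forall>x y. (x,y) \<in> Rr n \<longrightarrow> cl i x \<noteq> cl i y \<longrightarrow> u y \<le> u x"
  proof (intro allI impI)
    fix x y assume "(x,y) \<in> Rr n" "cl i x \<noteq> cl i y"
    then have "(x,y) \<in> Pset n i" by (simp add: Pset_def)
    then have "(x,y) \<notin> Inv n u" using e by blast
    then show "u y \<le> u x" using \<open>(x,y) \<in> Rr n\<close> by (simp add: Inv_def)
  qed
next
  assume a: "\<forall>x y. (x,y) \<in> Rr n \<longrightarrow> cl i x \<noteq> cl i y \<longrightarrow> u y \<le> u x"
  show "Inv n u \<inter> Pset n i = {}"
  proof (rule ccontr)
    assume "Inv n u \<inter> Pset n i \<noteq> {}"
    then obtain x y where "(x,y) \<in> Inv n u" "(x,y) \<in> Pset n i" by auto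
    then have "(x,y) \<in> Rr n" "cl i x \<noteq> cl i y" "u x < u y" by (auto simp: Inv_def Pset_def)
    then show False using a by force
  qed
qed

definition Tc :: "nat \<Rightarrow> (int \<Rightarrow> int) \<Rightarrow> nat \<Rightarrow> bool" where
  "Tc n u i \<longleftrightarrow> (\<forall>j k :: int. 0 \<le> j \<and> j \<le> int i \<and> int i < k \<and> k \<le> int n
                 \<longrightarrow> \<bar>(if j = 0 then 0 else u j)\<bar> < u k)"

lemma CE0: assumes "2 \<le> n" "sperm n u" shows "Tc n u 0 \<longleftrightarrow> Inv n u \<inter> Pset n 0 = {}"
proof
  note P = sperm_props[OF assms(2)]
  assume "Tc n u 0"
  have pos: "0 < u k" if "1 \<le> k" "k \<le> int n" for k
    using \<open>Tc n u 0\<close>[unfolded Tc_def, rule_format, of 0 k] that by simp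
  show "Inv n u \<inter> Pset n 0 = {}" unfolding noinv_iff
  proof (intro allI impI)
    fix x y assume r: "(x,y) \<in> Rr n" and c: "cl 0 x \<noteq> cl 0 y"
    from r have r': "0 < \<bar>x\<bar>" "\<bar>x\<bar> \<le> int n" "0 < \<bar>y\<bar>" "\<bar>y\<bar> \<le> int n" "y < x" by (auto simp: Rr_def)
    with c have xy: "0 < x" "y < 0" by (auto simp: cl_def split: if_splits)
    have "0 < u x" using pos[of x] xy r' by simp
    moreover have "0 < u (-y)" using pos[of "-y"] xy r' by simp
    ultimately show "u y \<le> u x" using P(1)[of y] by simp
  qed
next
  note P = sperm_props[OF assms(2)]
  assume "Inv n u \<inter> Pset n 0 = {}"
  then have ni: "\<And>x y. (x,y) \<in> Rr n \<Longrightarrow> cl 0 x \<noteq> cl 0 y \<Longrightarrow> u y \<le> u x" unfolding noinv_iff by blast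
  have pos: "0 < u k" if k: "1 \<le> k" "k \<le> int n" for k
  proof (rule ccontr)
    assume "\<not> 0 < u k"
    moreover have "u k \<noteq> 0" using sperm_nz[OF assms(2)] k by simp
    ultimately have neg: "u k < 0" by simp
    have "0 < u l" if "1 \<le> l" "l \<le> int n" "l \<noteq> k" for l
    proof -
      have "(l, -k) \<in> Rr n" using that k by (auto simp: Rr_def)
      moreover have "cl 0 l \<noteq> cl 0 (-k)" using that k by (simp add: cl_def)
      ultimately have "u (-k) \<le> u l" by (rule ni)
      then show ?thesis using P(1)[of k] neg by simp
    qed
    then show False using sp_one_neg[OF assms(2) k neg] by blast
  qed
  show "Tc n u 0" unfolding Tc_def using pos by auto
qed

lemma cl_small: "2 \<le> i \<Longrightarrow> \<bar>x\<bar> \<le> int i \<Longrightarrow> cl i x = 0"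
  by (simp add: cl_def)
lemma cl_pos: "2 \<le> i \<Longrightarrow> int i < x \<Longrightarrow> cl i x = 1"
  by (simp add: cl_def)
lemma cl_neg: "2 \<le> i \<Longrightarrow> x < - int i \<Longrightarrow> cl i x = 2"
  by (simp add: cl_def)

lemma CE2: assumes "2 \<le> n" "sperm n u" "2 \<le> i" "i < n" shows "Tc n u i \<longleftrightarrow> Inv n u \<inter> Pset n i = {}"
proof
  note P = sperm_props[OF assms(2)]
  assume "Tc n u i"
  have a: "0 < u k" if "int i < k" "k \<le> int n" for k
    using \<open>Tc n u i\<close>[unfolded Tc_def, rule_format, of 0 k] that by simp
  have b: "\<bar>u j\<bar> < u k" if "1 \<le> j" "j \<le> int i" "int i < k" "k \<le> int n" for j k
    using \<open>Tc n u i\<close>[unfolded Tc_def, rule_format, of j k] that by simp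
  have b': "\<bar>u j\<bar> < u k" if "j \<noteq> 0" "\<bar>j\<bar> \<le> int i" "int i < k" "k \<le> int n" for j k
  proof (cases "0 < j")
    case True then show ?thesis using b[of j k] that by simp
  next
    case False then show ?thesis using b[of "-j" k] that P(1)[of j] by simp
  qed
  show "Inv n u \<inter> Pset n i = {}" unfolding noinv_iff
  proof (intro allI impI)
    fix x y assume r: "(x,y) \<in> Rr n" and c: "cl i x \<noteq> cl i y"
    from r have r': "0 < \<bar>x\<bar>" "\<bar>x\<bar> \<le> int n" "0 < \<bar>y\<bar>" "\<bar>y\<bar> \<le> int n" "y < x" by (auto simp: Rr_def)
    consider "\<bar>x\<bar> \<le> int i" | "int i < x" | "x < - int i" by linarith
    then show "u y \<le> u x"
    proof cases
      case 1
      have "\<not> \<bar>y\<bar> \<le> int i" using c cl_small[OF assms(3) 1] cl_small[OF assms(3), of y] by auto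
      then have y: "y < - int i" using 1 r'(5) by linarith
      then have "\<bar>u x\<bar> < u (-y)" using b'[of x "-y"] 1 r' by simp
      then show ?thesis using P(1)[of y] by simp
    next
      case 2
      note xi = this
      have "\<not> int i < y" using c cl_pos[OF assms(3) xi] cl_pos[OF assms(3), of y] by auto
      then consider "\<bar>y\<bar> \<le> int i" | "y < - int i" by linarith
      then show ?thesis
      proof cases
        case 1 then show ?thesis using b'[of y x] xi r' by simp
      next
        case 2
        then have "0 < u (-y)" "0 < u x" using a[of "-y"] a[of x] r' xi by auto
        then show ?thesis using P(1)[of y] by simp
      qed
    next
      case 3
      then have "cl i x = cl i y" using r'(5) cl_neg[OF assms(3), of x] cl_neg[OF assms(3), of y] by simp
      then show ?thesis using c by simp
    qed
  qed
next
  note P = sperm_props[OF assms(2)]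
  assume "Inv n u \<inter> Pset n i = {}"
  then have ni: "\<And>x y. (x,y) \<in> Rr n \<Longrightarrow> cl i x \<noteq> cl i y \<Longrightarrow> u y \<le> u x" unfolding noinv_iff by blast
  have key: "\<bar>u j\<bar> < u k" if j: "1 \<le> j" "j \<le> int i" and k: "int i < k" "k \<le> int n" for j k
  proof -
    have "(k, j) \<in> Rr n" "(k, -j) \<in> Rr n" using j k by (auto simp: Rr_def)
    moreover have "cl i k \<noteq> cl i j" "cl i k \<noteq> cl i (-j)"
      using j k cl_pos[OF assms(3), of k] cl_small[OF assms(3), of j] cl_small[OF assms(3), of "-j"] by simp_all
    ultimately have "u j \<le> u k" "u (-j) \<le> u k" using ni by blast+
    moreover have "j \<noteq> k" "-j \<noteq> k" using j k by simp_all
    then have "u j \<noteq> u k" "u (-j) \<noteq> u k" using P(2) by (metis injD)+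
    ultimately show ?thesis using P(1)[of j] by auto
  qed
  show "Tc n u i" unfolding Tc_def
  proof (intro allI impI)
    fix j k :: int assume h: "0 \<le> j \<and> j \<le> int i \<and> int i < k \<and> k \<le> int n"
    show "\<bar>(if j = 0 then 0 else u j)\<bar> < u k"
    proof (cases "j = 0")
      case True then show ?thesis using key[of 1 k] h assms(3) by simp
    next
      case False then show ?thesis using key[of j k] h by simp
    qed
  qed
qed

definition Sp :: "nat \<Rightarrow> (int \<Rightarrow> int) \<Rightarrow> bool" where
  "Sp n u \<longleftrightarrow> ((u 1 = 1 \<and> (\<forall>k::int. 1 \<le> k \<and> k \<le> int n \<longrightarrow> u k > 0)) \<or>
          (u 1 < -1 \<and> inv u 1 < -1 \<and> card {i::int. 1 \<le> i \<and> i \<le> int n \<and> u i < 0} = 2))"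

lemma cl1_orient: assumes "(x,y) \<in> Rr n" "cl 1 x \<noteq> cl 1 y"
  shows "(x = -1 \<or> 2 \<le> x) \<and> (y = 1 \<or> y \<le> -2)"
proof -
  have r: "x \<noteq> 0" "y \<noteq> 0" "y < x" "x \<noteq> -y" using assms(1) by (auto simp: Rr_def)
  have "(x = -1 \<or> 2 \<le> x) \<noteq> (y = -1 \<or> 2 \<le> y)" using assms(2) by (auto simp: cl_def split: if_splits)
  then show ?thesis using r by linarith
qed

lemma X_Rr: assumes "2 \<le> n" "x = -1 \<or> (2 \<le> x \<and> x \<le> int n)" "x' = -1 \<or> (2 \<le> x' \<and> x' \<le> int n)" "x \<noteq> x'"
  shows "(x, -x') \<in> Rr n \<and> cl 1 x \<noteq> cl 1 (-x') \<and> x \<noteq> -x'"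
  using assms(2,3)
proof (elim disjE conjE)
  assume "x = -1" "x' = -1" then show ?thesis using assms(4) by simp
next
  assume a: "x = -1" "2 \<le> x'" "x' \<le> int n" then show ?thesis using assms(1) by (simp add: Rr_def cl_def)
next
  assume a: "2 \<le> x" "x \<le> int n" "x' = -1" then show ?thesis using assms(1) by (simp add: Rr_def cl_def)
next
  assume a: "2 \<le> x" "x \<le> int n" "2 \<le> x'" "x' \<le> int n" then show ?thesis using assms(4) by (simp add: Rr_def cl_def)
qed

lemma CE1: assumes "2 \<le> n" "sperm n u" shows "Sp n u \<longleftrightarrow> Inv n u \<inter> Pset n 1 = {}"
proof
  note P = sperm_props[OF assms(2)]
  have nz: "u z \<noteq> 0" if "z \<noteq> 0" for z using sperm_nz[OF assms(2) that] .
  assume "Sp n u"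
  then consider (S1) "u 1 = 1" "\<forall>k::int. 1 \<le> k \<and> k \<le> int n \<longrightarrow> u k > 0"
    | (S2) "u 1 < -1" "inv u 1 < -1" "card {i::int. 1 \<le> i \<and> i \<le> int n \<and> u i < 0} = 2"
    unfolding Sp_def by blast
  then show "Inv n u \<inter> Pset n 1 = {}"
  proof cases
    case S1
    have ge2: "2 \<le> u z" if "2 \<le> z" "z \<le> int n" for z
    proof -
      have "0 < u z" using S1(2) that by simp
      moreover have "z \<noteq> 1" using that by simp
      then have "u z \<noteq> u 1" using P(2) by (metis injD)
      ultimately show ?thesis using S1(1) by simp
    qed
    show ?thesis unfolding noinv_iff
    proof (intro allI impI)
      fix x y assume r: "(x,y) \<in> Rr n" and c: "cl 1 x \<noteq> cl 1 y"
      have o: "(x = -1 \<or> 2 \<le> x) \<and> (y = 1 \<or> y \<le> -2)" by (rule cl1_orient[OF r c])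
      have r': "\<bar>x\<bar> \<le> int n" "\<bar>y\<bar> \<le> int n" "x \<noteq> -y" using r by (auto simp: Rr_def)
      have uy: "y \<le> -2 \<Longrightarrow> u y \<le> -2" using ge2[of "-y"] r' P(1)[of y] by simp
      show "u y \<le> u x"
      proof (cases "x = -1")
        case True
        then have "y \<noteq> 1" using r'(3) by simp
        then have "y \<le> -2" using o by blast
        then show ?thesis using uy True P(1)[of 1] S1(1) by simp
      next
        case False
        then have "2 \<le> x" using o by blast
        then have ux: "2 \<le> u x" using ge2[of x] r'(1) by simp
        from o have "y = 1 \<or> y \<le> -2" by blast
        then show ?thesis
        proof
          assume "y = 1" then show ?thesis using ux S1(1) by simp
        next
          assume "y \<le> -2" then show ?thesis using ux uy by simp
        qed
      qed
    qed
  next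
    case S2
    define c where "c = - inv u 1"
    have uc': "u (-c) = 1" unfolding c_def using surj_f_inv_f[OF P(3)] by simp
    have uc: "u c = -1" using uc' P(1)[of c] by simp
    have c2: "2 \<le> c" using S2(2) by (simp add: c_def)
    have cn: "c \<le> int n"
    proof (rule ccontr)
      assume "\<not> c \<le> int n"
      then have "u (-c) = -c" using P(4)[of "-c"] by simp
      then show False using uc' c2 by simp
    qed
    let ?N = "{i::int. 1 \<le> i \<and> i \<le> int n \<and> u i < 0}"
    have sub: "{1, c} \<subseteq> ?N" using S2(1) uc c2 cn by auto
    have "finite ?N" by (rule finite_subset[of _ "{1..int n}"]) auto
    moreover have "card {1, c} = card ?N" using S2(3) c2 by simp
    ultimately have Neq: "{1, c} = ?N" using card_subset_eq[OF _ sub] by simp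
    have ge2: "2 \<le> u z" if "2 \<le> z" "z \<le> int n" "z \<noteq> c" for z
    proof -
      have "z \<notin> {1, c}" using that by auto
      then have "z \<notin> ?N" unfolding Neq .
      then have "0 \<le> u z" using that by auto
      moreover have "u z \<noteq> 0" using nz that by simp
      moreover have "z \<noteq> -c" using that c2 by simp
      then have "u z \<noteq> u (-c)" using P(2) by (metis injD)
      ultimately show ?thesis using uc' by simp
    qed
    have um1: "2 \<le> u (-1)" using S2(1) P(1)[of 1] by simp
    show ?thesis unfolding noinv_iff
    proof (intro allI impI)
      fix x y assume r: "(x,y) \<in> Rr n" and cc: "cl 1 x \<noteq> cl 1 y"
      have o: "(x = -1 \<or> 2 \<le> x) \<and> (y = 1 \<or> y \<le> -2)" by (rule cl1_orient[OF r cc])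
      have r': "\<bar>x\<bar> \<le> int n" "\<bar>y\<bar> \<le> int n" "x \<noteq> -y" using r by (auto simp: Rr_def)
      have uy: "y \<le> -2 \<Longrightarrow> y \<noteq> -c \<Longrightarrow> u y \<le> -2" using ge2[of "-y"] r' P(1)[of y] by simp
      from o have oy: "y = 1 \<or> y \<le> -2" by blast
      show "u y \<le> u x"
      proof (cases "x = c")
        case True
        then have ync: "y \<noteq> -c" using r'(3) by simp
        from oy show ?thesis
        proof
          assume "y = 1" then show ?thesis using S2(1) uc True by simp
        next
          assume "y \<le> -2" then show ?thesis using uy[OF _ ync] uc True by simp
        qed
      next
        case False
        from o have "x = -1 \<or> 2 \<le> x" by blast
        then have ux: "2 \<le> u x"
        proof
          assume "x = -1" then show ?thesis using um1 by simp
        next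
          assume "2 \<le> x" then show ?thesis using ge2[of x] r'(1) False by simp
        qed
        have "u y \<le> 1"
        proof (cases "y = -c")
          case True then show ?thesis using uc' by simp
        next
          case False
          from oy show ?thesis
          proof
            assume "y = 1" then show ?thesis using S2(1) by simp
          next
            assume "y \<le> -2" then show ?thesis using uy False by simp
          qed
        qed
        then show ?thesis using ux by simp
      qed
    qed
  qed
next
  note P = sperm_props[OF assms(2)]
  have nz: "u z \<noteq> 0" if "z \<noteq> 0" for z using sperm_nz[OF assms(2) that] .
  assume "Inv n u \<inter> Pset n 1 = {}"
  then have ni: "\<And>x y. (x,y) \<in> Rr n \<Longrightarrow> cl 1 x \<noteq> cl 1 y \<Longrightarrow> u y \<le> u x" unfolding noinv_iff by blast
  define inX where "inX z \<longleftrightarrow> z = -1 \<or> (2 \<le> z \<and> z \<le> int n)" for z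
  have ps: "0 < u x + u x'" if "inX x" "inX x'" "x \<noteq> x'" for x x'
  proof -
    have h: "(x, -x') \<in> Rr n \<and> cl 1 x \<noteq> cl 1 (-x') \<and> x \<noteq> -x'"
      using X_Rr[OF assms(1), of x x'] that unfolding inX_def by blast
    then have "u (-x') \<le> u x" using ni by blast
    moreover have "x \<noteq> -x'" using h by blast
    then have "u (-x') \<noteq> u x" using P(2) by (metis injD)
    ultimately show ?thesis using P(1)[of x'] by simp
  qed
  obtain z0 where z0: "u z0 = 1" using P(3) by (metis surjD)
  have z0n: "\<bar>z0\<bar> \<le> int n"
  proof (rule ccontr)
    assume "\<not> \<bar>z0\<bar> \<le> int n" then have "u z0 = z0" using P(4) by simp
    then show False using z0 assms(1) \<open>\<not> \<bar>z0\<bar> \<le> int n\<close> by simp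
  qed
  have z00: "z0 \<noteq> 0" using z0 P(7) by auto
  have u1: "u 1 \<noteq> 0" using nz by simp
  show "Sp n u"
  proof (cases "0 < u 1")
    case True
    have big: "u 1 < u z" if "2 \<le> z" "z \<le> int n" for z
      using ps[of z "-1"] that P(1)[of 1] by (simp add: inX_def)
    have "z0 = 1"
    proof -
      consider "z0 = 1" | "z0 = -1" | "2 \<le> z0 \<and> z0 \<le> int n" | "z0 \<le> -2 \<and> -z0 \<le> int n"
        using z0n z00 by linarith
      then show ?thesis
      proof cases
        case 2 then show ?thesis using z0 P(1)[of 1] True by simp
      next
        case 3 then show ?thesis using big[of z0] z0 True by simp
      next
        case 4 then show ?thesis using big[of "-z0"] z0 True P(1)[of z0] by simp
      qed simp
    qed
    then have "u 1 = 1" using z0 by simp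
    moreover have "\<forall>k::int. 1 \<le> k \<and> k \<le> int n \<longrightarrow> u k > 0"
    proof (intro allI impI)
      fix k :: int assume "1 \<le> k \<and> k \<le> int n"
      then show "u k > 0" using big[of k] True by (cases "k = 1") auto
    qed
    ultimately show ?thesis unfolding Sp_def by blast
  next
    case False
    then have u1n: "u 1 < 0" using u1 by simp
    have "\<exists>c. 2 \<le> c \<and> c \<le> int n \<and> u c < 0"
    proof (rule ccontr)
      assume na: "\<not> (\<exists>c. 2 \<le> c \<and> c \<le> int n \<and> u c < 0)"
      have pl: "0 < u l" if "1 \<le> l" "l \<le> int n" "l \<noteq> 1" for l
      proof -
        have "2 \<le> l" using that by simp
        then have "\<not> u l < 0" using na that(2) by blast
        moreover have "u l \<noteq> 0" using nz that by simp
        ultimately show ?thesis by simp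
      qed
      have "(1::int) \<le> int n" using assms(1) by simp
      show False by (rule sp_one_neg[OF assms(2) order_refl \<open>1 \<le> int n\<close> u1n pl])
    qed
    then obtain c where c: "2 \<le> c" "c \<le> int n" "u c < 0" by blast
    have pos: "0 < u z" if "2 \<le> z" "z \<le> int n" "z \<noteq> c" for z
    proof (rule ccontr)
      assume "\<not> 0 < u z"
      moreover have "u z \<noteq> 0" using nz that by simp
      ultimately have "u z < 0" by simp
      moreover have "0 < u z + u c" using ps[of z c] that c by (simp add: inX_def)
      ultimately show False using c by simp
    qed
    have "z0 = -c"
    proof -
      consider "z0 = 1" | "z0 = -1" | "2 \<le> z0 \<and> z0 \<le> int n" | "z0 \<le> -2 \<and> -z0 \<le> int n"
        using z0n z00 by linarith
      then show ?thesis
      proof cases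
        case 1 then show ?thesis using z0 u1n by simp
      next
        case 2 then show ?thesis using ps[of "-1" c] z0 c by (simp add: inX_def)
      next
        case 3
        show ?thesis
        proof (cases "z0 = c")
          case True then show ?thesis using z0 c by simp
        next
          case False
          then have "0 < u z0 + u c" using ps[of z0 c] 3 c by (simp add: inX_def)
          then show ?thesis using z0 c by simp
        qed
      next
        case 4
        then have "u (-z0) < 0" using z0 P(1)[of z0] by simp
        show ?thesis
        proof (rule ccontr)
          assume "z0 \<noteq> -c"
          then have "-z0 \<noteq> c" by auto
          then have "0 < u (-z0)" using pos[of "-z0"] 4 by simp
          then show False using \<open>u (-z0) < 0\<close> by simp
        qed
      qed
    qed
    then have uc': "u (-c) = 1" using z0 by simp
    then have uc: "u c = -1" using P(1)[of c] by simp
    have "(1::int) \<noteq> c" using c by simp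
    then have "u 1 \<noteq> u c" using P(2) by (metis injD)
    then have a1: "u 1 < -1" using u1n uc by simp
    have a2: "inv u 1 < -1" using inv_f_f[OF P(2), of "-c"] uc' c by simp
    have "{i::int. 1 \<le> i \<and> i \<le> int n \<and> u i < 0} = {1, c}"
    proof (rule set_eqI, rule iffI)
      fix i assume "i \<in> {i::int. 1 \<le> i \<and> i \<le> int n \<and> u i < 0}"
      then have h: "1 \<le> i" "i \<le> int n" "u i < 0" by auto
      show "i \<in> {1, c}"
      proof (rule ccontr)
        assume "i \<notin> {1, c}"
        then have "2 \<le> i" "i \<noteq> c" using h(1) by auto
        then show False using pos[of i] h by simp
      qed
    next
      fix i assume "i \<in> {1, c}"
      then show "i \<in> {i::int. 1 \<le> i \<and> i \<le> int n \<and> u i < 0}" using c u1n assms(1) by auto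
    qed
    then have "card {i::int. 1 \<le> i \<and> i \<le> int n \<and> u i < 0} = 2" using c by simp
    then show ?thesis unfolding Sp_def using a1 a2 by blast
  qed
qed

theorem mainTheorem16:
  fixes n :: nat and u :: "int \<Rightarrow> int"
  assumes "n \<ge> 2" and "u \<in> Dn n"
  defines "T \<equiv> {tgen i | i. i < n \<and> i \<noteq> 1 \<and>
             (\<forall>j k :: int. 0 \<le> j \<and> j \<le> int i \<and> int i < k \<and> k \<le> int n
                 \<longrightarrow> \<bar>(if j = 0 then 0 else u j)\<bar> < u k)}"
  shows "((u 1 = 1 \<and> (\<forall>k::int. 1 \<le> k \<and> k \<le> int n \<longrightarrow> u k > 0)) \<or>
          (u 1 < -1 \<and> inv u 1 < -1 \<and> card {i::int. 1 \<le> i \<and> i \<le> int n \<and> u i < 0} = 2)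
          \<longrightarrow> cosupp n u = {tgen 1} \<union> T)
       \<and> (\<not> ((u 1 = 1 \<and> (\<forall>k::int. 1 \<le> k \<and> k \<le> int n \<longrightarrow> u k > 0)) \<or>
          (u 1 < -1 \<and> inv u 1 < -1 \<and> card {i::int. 1 \<le> i \<and> i \<le> int n \<and> u i < 0} = 2))
          \<longrightarrow> cosupp n u = T)"
proof -
  have su: "sperm n u" using sperm_Dn[OF assms(1,2)] .
  have T': "T = tgen ` {i. i < n \<and> i \<noteq> 1 \<and> Inv n u \<inter> Pset n i = {}}"
  proof -
    have "Tc n u i \<longleftrightarrow> Inv n u \<inter> Pset n i = {}" if "i < n" "i \<noteq> 1" for i
    proof (cases "i = 0")
      case True then show ?thesis using CE0[OF assms(1) su] by simp
    next
      case False then show ?thesis using CE2[OF assms(1) su _ that(1)] that(2) by simp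
    qed
    then have "T = tgen ` {i. i < n \<and> i \<noteq> 1 \<and> Tc n u i}"
      unfolding T_def Tc_def by blast
    also have "{i. i < n \<and> i \<noteq> 1 \<and> Tc n u i} = {i. i < n \<and> i \<noteq> 1 \<and> Inv n u \<inter> Pset n i = {}}"
      using \<open>\<And>i. i < n \<Longrightarrow> i \<noteq> 1 \<Longrightarrow> _\<close> by blast
    finally show ?thesis .
  qed
  have C: "cosupp n u = tgen ` {i. i < n \<and> Inv n u \<inter> Pset n i = {}}" by (rule cosupp_eq[OF assms(1,2)])
  have E1: "Sp n u \<longleftrightarrow> Inv n u \<inter> Pset n 1 = {}" by (rule CE1[OF assms(1) su])
  have n1: "1 < n" using assms(1) by simp
  show ?thesis unfolding Sp_def[symmetric]
  proof (intro conjI impI)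
    assume "Sp n u"
    then have "{i. i < n \<and> Inv n u \<inter> Pset n i = {}} = insert 1 {i. i < n \<and> i \<noteq> 1 \<and> Inv n u \<inter> Pset n i = {}}"
      using E1 n1 by auto
    then show "cosupp n u = {tgen 1} \<union> T" unfolding C T' by simp
  next
    assume "\<not> Sp n u"
    then have "{i. i < n \<and> Inv n u \<inter> Pset n i = {}} = {i. i < n \<and> i \<noteq> 1 \<and> Inv n u \<inter> Pset n i = {}}"
      using E1 by auto
    then show "cosupp n u = T" unfolding C T' by simp
  qed
qed

end
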